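(* Let $p$ and $\ell$ be arbitrary positive integers and let $\varepsilon\in(0,1)$. There exist a finite metric space $(\mathcal{X},d)$, an initial forest on it with $\gamma(\mathcal{P})=1$, and a choice of sets $R_i\subseteq P_i$ with $|R_i|=\ell$ for every component, such that the spanning tree returned by $\textsf{MultiRepMFC}(R)$ has weight exactly $$\frac{(2+\ell\varepsilon-\varepsilon)p-1}{(1+\varepsilon\ell)p-\varepsilon}$$ times the weight of an optimal solution of the Metric Forest Completion problem (which for this instance is also a minimum spanning tree of $G_{\mathcal{X}}$).
   Context: For a finite metric space $(\mathcal{X},d)$, $G_{\mathcal{X}}$ is the complete graph on $\mathcal{X}$ with edge weights $d$, and the weight of an edge set is the sum of its edge weights. For $A,B\subseteq\mathcal{X}$, $d(A,B)=\min_{a\in A,b\in B}d(a,b)$. An initial forest consists of a partition $\mathcal{P}=\{P_1,\dots,P_t\}$ of $\mathcal{X}$ and a spanning tree $T_i$ of the complete graph on each $P_i$; $E_t$ is the union of their edge sets. The Metric Forest Completion (MFC) problem: find a minimum-weight spanning tree of $G_{\mathcal{X}}$ containing $E_t$. Overlap parameter: with $\mathcal{T}_{\mathcal{X}}$ the set of minimum spanning trees of $G_{\mathcal{X}}$ and $T(\mathcal{P})$ the edges of $T$ with both endpoints in the same part, $\gamma(\mathcal{P})=w(E_t)/\max_{T\in\mathcal{T}_{\mathcal{X}}}w(T(\mathcal{P}))$. Algorithm $\textsf{MultiRepMFC}(R)$, for nonempty $R_i\subseteq P_i$: for each pair $i\ne j$ set $\hat w(v_i,v_j)=\min\{d(P_i,R_j),d(P_j,R_i)\}$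 and record a point pair attaining it; compute a minimum spanning tree of the complete graph on $v_1,\dots,v_t$ with weights $\hat w$; return $E_t$ together with the recorded point pairs of the edges of this tree. *)

theory Defs
  imports Complex_Main
begin

definition metric_on :: "'a set \<Rightarrow> ('a \<Rightarrow> 'a \<Rightarrow> real) \<Rightarrow> bool" where
  "metric_on X d \<longleftrightarrow>
     (\<forall>x\<in>X. \<forall>y\<in>X. d x y = 0 \<longleftrightarrow> x = y) \<and>
     (\<forall>x\<in>X. \<forall>y\<in>X. d x y = d y x) \<and>
     (\<forall>x\<in>X. \<forall>y\<in>X. \<forall>z\<in>X. d x z \<le> d x y + d y z)"

definition edges_on :: "'a set \<Rightarrow> 'a set set" where
  "edges_on V = {{x, y} | x y. x \<in> V \<and> y \<in> V \<and> x \<noteq> y}"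

definition sym2 :: "('a \<Rightarrow> 'a \<Rightarrow> real) \<Rightarrow> 'a set \<Rightarrow> real" where
  "sym2 g e = (THE r. \<exists>x y. e = {x, y} \<and> r = g x y)"

definition wt :: "('a set \<Rightarrow> real) \<Rightarrow> 'a set set \<Rightarrow> real" where
  "wt f E = (\<Sum>e\<in>E. f e)"

definition adj :: "'a set set \<Rightarrow> ('a \<times> 'a) set" where
  "adj T = {(x, y). {x, y} \<in> T}"

definition spanning_tree :: "'a set \<Rightarrow> 'a set set \<Rightarrow> bool" where
  "spanning_tree V T \<longleftrightarrow> finite V \<and> V \<noteq> {} \<and> T \<subseteq> edges_on V \<and>
     (\<forall>x\<in>V. \<forall>y\<in>V. (x, y) \<in> (adj T)\<^sup>*) \<and> card T = card V - 1"

definition is_mst :: "'a set \<Rightarrow> ('a set \<Rightarrow> real) \<Rightarrow> 'a set set \<Rightarrow> bool" where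
  "is_mst V f T \<longleftrightarrow> spanning_tree V T \<and>
     (\<forall>T'. spanning_tree V T' \<longrightarrow> wt f T \<le> wt f T')"

definition setdist :: "('a \<Rightarrow> 'a \<Rightarrow> real) \<Rightarrow> 'a set \<Rightarrow> 'a set \<Rightarrow> real" where
  "setdist d A B = Min {d a b | a b. a \<in> A \<and> b \<in> B}"

definition is_partition :: "'a set \<Rightarrow> 'a set set \<Rightarrow> bool" where
  "is_partition X Pt \<longleftrightarrow> (\<forall>P\<in>Pt. P \<noteq> {}) \<and> \<Union>Pt = X \<and>
     (\<forall>P\<in>Pt. \<forall>Q\<in>Pt. P \<noteq> Q \<longrightarrow> P \<inter> Q = {})"

definition initial_forest :: "'a set \<Rightarrow> 'a set set \<Rightarrow> ('a set \<Rightarrow> 'a set set) \<Rightarrow> bool" where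
  "initial_forest X Pt T \<longleftrightarrow> is_partition X Pt \<and> (\<forall>P\<in>Pt. spanning_tree P (T P))"

definition forest_edges :: "'a set set \<Rightarrow> ('a set \<Rightarrow> 'a set set) \<Rightarrow> 'a set set" where
  "forest_edges Pt T = (\<Union>P\<in>Pt. T P)"

definition intra :: "'a set set \<Rightarrow> 'a set set \<Rightarrow> 'a set set" where
  "intra Pt T = {e\<in>T. \<exists>P\<in>Pt. e \<subseteq> P}"

definition gamma :: "'a set \<Rightarrow> ('a \<Rightarrow> 'a \<Rightarrow> real) \<Rightarrow> 'a set set \<Rightarrow> ('a set \<Rightarrow> 'a set set) \<Rightarrow> real" where
  "gamma X d Pt T = wt (sym2 d) (forest_edges Pt T) /
     Max {wt (sym2 d) (intra Pt S) | S. is_mst X (sym2 d) S}"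

definition mfc_opt :: "'a set \<Rightarrow> ('a \<Rightarrow> 'a \<Rightarrow> real) \<Rightarrow> 'a set set \<Rightarrow> ('a set \<Rightarrow> 'a set set) \<Rightarrow> 'a set set \<Rightarrow> bool" where
  "mfc_opt X d Pt T S \<longleftrightarrow> spanning_tree X S \<and> forest_edges Pt T \<subseteq> S \<and>
     (\<forall>S'. spanning_tree X S' \<and> forest_edges Pt T \<subseteq> S' \<longrightarrow> wt (sym2 d) S \<le> wt (sym2 d) S')"

text \<open>The contracted weight w-hat on the pair of parts {P,Q} (parts play the role of v_i).\<close>
definition what :: "('a \<Rightarrow> 'a \<Rightarrow> real) \<Rightarrow> ('a set \<Rightarrow> 'a set) \<Rightarrow> 'a set \<Rightarrow> 'a set \<Rightarrow> real" where
  "what d R P Q = min (setdist d P (R Q)) (setdist d Q (R P))"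

text \<open>F is a possible output of MultiRepMFC(R) (for some tie-breaking of the recorded
  point pairs and of the minimum spanning tree on the contracted graph).\<close>
definition multirep_output ::
  "'a set \<Rightarrow> ('a \<Rightarrow> 'a \<Rightarrow> real) \<Rightarrow> 'a set set \<Rightarrow> ('a set \<Rightarrow> 'a set set) \<Rightarrow> ('a set \<Rightarrow> 'a set)
     \<Rightarrow> 'a set set \<Rightarrow> bool" where
  "multirep_output X d Pt T R F \<longleftrightarrow>
     (\<exists>rec :: 'a set set \<Rightarrow> 'a \<times> 'a. \<exists>M.
        (\<forall>P\<in>Pt. \<forall>Q\<in>Pt. P \<noteq> Q \<longrightarrow>
           ((fst (rec {P, Q}) \<in> P \<and> snd (rec {P, Q}) \<in> R Q) \<or>
            (fst (rec {P, Q}) \<in> Q \<and> snd (rec {P, Q}) \<in> R P)) \<and>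
           d (fst (rec {P, Q})) (snd (rec {P, Q})) = what d R P Q) \<and>
        is_mst Pt (sym2 (what d R)) M \<and>
        F = forest_edges Pt T \<union> {{fst (rec e), snd (rec e)} | e. e \<in> M})"

end

theory Submission
  imports Defs
begin


lemma sym2_eq:
  assumes "\<And>a b. g a b = g b a"
  shows "sym2 g {x, y} = g x y"
  unfolding sym2_def
proof (rule the_equality)
  show "\<exists>a b. {x, y} = {a, b} \<and> g x y = g a b" by blast
next
  fix r assume "\<exists>a b. {x, y} = {a, b} \<and> r = g a b"
  then obtain a b where "{x, y} = {a, b}" "r = g a b" by blast
  then show "r = g x y" using assms by (auto simp: doubleton_eq_iff)
qed

definition star :: "'a \<Rightarrow> 'a set \<Rightarrow> 'a set set" where
  "star c V = {{c, x} | x. x \<in> V \<and> x \<noteq> c}"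

lemma star_image: "star c V = (\<lambda>x. {c, x}) ` (V - {c})"
  unfolding star_def by auto

lemma star_inj: "inj_on (\<lambda>x. {c, x}) (V - {c})"
  by (auto simp: inj_on_def doubleton_eq_iff)

lemma adj_sym: "(x, y) \<in> adj T \<Longrightarrow> (y, x) \<in> adj T"
  unfolding adj_def by (auto simp: insert_commute)

lemma rt_sym: "(x, y) \<in> (adj T)\<^sup>* \<Longrightarrow> (y, x) \<in> (adj T)\<^sup>*"
proof (induction rule: rtrancl_induct)
  case base then show ?case by simp
next
  case (step y z)
  then have "(z, y) \<in> adj T" by (simp add: adj_sym)
  then show ?case using step(3) by (meson converse_rtrancl_into_rtrancl)
qed

lemma edge_rt: "{x, y} \<in> T \<Longrightarrow> (x, y) \<in> (adj T)\<^sup>*"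
  unfolding adj_def by auto

lemma star_spanning:
  assumes "finite V" "c \<in> V"
  shows "spanning_tree V (star c V)"
proof -
  have sub: "star c V \<subseteq> edges_on V" using assms unfolding star_def edges_on_def by auto
  have conn0: "(x, c) \<in> (adj (star c V))\<^sup>*" if "x \<in> V" for x
  proof (cases "x = c")
    case False
    then have "{c, x} \<in> star c V" using that unfolding star_def by auto
    then have "{x, c} \<in> star c V" by (simp add: insert_commute)
    then show ?thesis by (rule edge_rt)
  qed simp
  have conn: "\<forall>x\<in>V. \<forall>y\<in>V. (x, y) \<in> (adj (star c V))\<^sup>*"
    using conn0 rt_sym by (meson rtrancl_trans)
  have "card (star c V) = card (V - {c})"
    unfolding star_image by (rule card_image[OF star_inj])
  also have "\<dots> = card V - 1" using assms by simp
  finally show ?thesis unfolding spanning_tree_def using assms sub conn by auto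
qed

lemma wt_star:
  assumes "finite V" "\<And>a b. g a b = g b a"
  shows "wt (sym2 g) (star c V) = (\<Sum>x\<in>V - {c}. g c x)"
  unfolding wt_def star_image
  by (simp add: sum.reindex[OF star_inj] sym2_eq[of g, OF assms(2)])

definition sameR :: "'a set set \<Rightarrow> ('a \<times> 'a) set" where
  "sameR Q = {(x, y). \<exists>A\<in>Q. x \<in> A \<and> y \<in> A}"

lemma sameR_I: "D \<in> Q \<Longrightarrow> x \<in> D \<Longrightarrow> y \<in> D \<Longrightarrow> (x, y) \<in> sameR Q"
  unfolding sameR_def by blast

lemma sameR_rt:
  assumes "is_partition V Q" "(x, y) \<in> (sameR Q)\<^sup>*"
  shows "x = y \<or> (x, y) \<in> sameR Q"
  using assms(2)
proof (induction rule: rtrancl_induct)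
  case base then show ?case by simp
next
  case (step y z)
  then show ?case using assms(1) unfolding sameR_def is_partition_def by blast
qed

lemma partD:
  assumes "is_partition V Q"
  shows "\<And>P. P \<in> Q \<Longrightarrow> P \<noteq> {}" "\<Union>Q = V"
    "\<And>P R. P \<in> Q \<Longrightarrow> R \<in> Q \<Longrightarrow> P \<noteq> R \<Longrightarrow> P \<inter> R = {}"
  using assms unfolding is_partition_def by auto

lemma cross_count:
  assumes "finite C"
  shows "finite V \<Longrightarrow> C \<subseteq> edges_on V \<Longrightarrow> is_partition V Q \<Longrightarrow>
    (\<forall>x\<in>V. \<forall>y\<in>V. (x, y) \<in> (sameR Q \<union> adj C)\<^sup>*) \<Longrightarrow> card Q \<le> card C + 1"
  using assms
proof (induction C arbitrary: Q rule: finite_induct)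
  case empty
  note pd = partD[OF empty(3)]
  have fQ: "finite Q" using empty(1) pd(2) by (metis Sup_upper finite_UnionD)
  have "\<forall>A\<in>Q. \<forall>B\<in>Q. A = B"
  proof (intro ballI)
    fix A B assume AB: "A \<in> Q" "B \<in> Q"
    obtain a where a: "a \<in> A" using AB pd(1) by blast
    obtain b where b: "b \<in> B" using AB pd(1) by blast
    have "a \<in> V" "b \<in> V" using a b AB pd(2) by auto
    moreover have "adj {} = {}" by (simp add: adj_def)
    ultimately have "(a, b) \<in> (sameR Q)\<^sup>*" using empty(4) by (metis Un_empty_right)
    then have "a = b \<or> (a, b) \<in> sameR Q" by (rule sameR_rt[OF empty(3)])
    then obtain D where "D \<in> Q" "a \<in> D" "b \<in> D" using a AB unfolding sameR_def by auto
    then show "A = B" using a b AB pd(3) by blast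
  qed
  then show ?case using fQ by (simp add: card_le_Suc0_iff_eq)
next
  case (insert e C)
  note pd = partD[OF insert(6)]
  from insert(5) obtain a b where eab: "e = {a, b}" "a \<in> V" "b \<in> V" "a \<noteq> b"
    unfolding edges_on_def by auto
  have CV: "C \<subseteq> edges_on V" using insert(5) by auto
  obtain A where A: "A \<in> Q" "a \<in> A" using pd(2) eab by blast
  obtain B where B: "B \<in> Q" "b \<in> B" using pd(2) eab by blast
  have fQ: "finite Q" using insert(4) pd(2) by (metis Sup_upper finite_UnionD)
  show ?case
  proof (cases "A = B")
    case True
    have "adj {e} \<subseteq> sameR Q" using eab A B True unfolding adj_def sameR_def
      by (auto simp: doubleton_eq_iff)
    moreover have "adj (insert e C) = adj {e} \<union> adj C" unfolding adj_def by auto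
    ultimately have "sameR Q \<union> adj (insert e C) \<subseteq> sameR Q \<union> adj C"
      by blast
    then have "(sameR Q \<union> adj (insert e C))\<^sup>* \<subseteq> (sameR Q \<union> adj C)\<^sup>*"
      by (rule rtrancl_mono)
    then have "\<forall>x\<in>V. \<forall>y\<in>V. (x, y) \<in> (sameR Q \<union> adj C)\<^sup>*"
      using insert(7) by (meson subsetD)
    then have "card Q \<le> card C + 1" using insert.IH[OF insert(4) CV insert(6)] by blast
    then show ?thesis using insert(1,2) by simp
  next
    case False
    define Q' where "Q' = insert (A \<union> B) (Q - {A, B})"
    have nAB: "A \<union> B \<notin> Q - {A, B}"
    proof
      assume h: "A \<union> B \<in> Q - {A, B}"
      then have "A \<union> B \<in> Q" "A \<union> B \<noteq> A" by simp_all
      then have "(A \<union> B) \<inter> A = {}" using pd(3)[of "A \<union> B" A] A(1) by simp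
      then show False using A(2) by simp
    qed
    have QQ: "P \<in> Q' \<longleftrightarrow> P = A \<union> B \<or> (P \<in> Q \<and> P \<noteq> A \<and> P \<noteq> B)" for P
      unfolding Q'_def by simp
    have part: "is_partition V Q'"
      unfolding is_partition_def
    proof (intro conjI)
      show "\<forall>P\<in>Q'. P \<noteq> {}"
      proof
        fix P assume "P \<in> Q'"
        then show "P \<noteq> {}" unfolding QQ using pd(1) A by fastforce
      qed
      have "\<Union>Q' = \<Union>Q" 
      proof
        show "\<Union>Q' \<subseteq> \<Union>Q" using A B unfolding Q'_def by blast
        show "\<Union>Q \<subseteq> \<Union>Q'" unfolding Q'_def by blast
      qed
      then show "\<Union>Q' = V" using pd(2) by simp
      show "\<forall>P\<in>Q'. \<forall>R\<in>Q'. P \<noteq> R \<longrightarrow> P \<inter> R = {}"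
      proof (intro ballI impI)
        fix P R assume PR: "P \<in> Q'" "R \<in> Q'" "P \<noteq> R"
        have dA: "A \<inter> D = {}" "B \<inter> D = {}" if "D \<in> Q" "D \<noteq> A" "D \<noteq> B" for D
          using pd(3)[OF A(1) that(1)] pd(3)[OF B(1) that(1)] that by auto
        show "P \<inter> R = {}"
        proof (cases "P = A \<union> B")
          case True
          then have "R \<in> Q" "R \<noteq> A" "R \<noteq> B" using PR unfolding QQ by auto
          then show ?thesis using True dA by auto
        next
          case F1: False
          then have P: "P \<in> Q" "P \<noteq> A" "P \<noteq> B" using PR unfolding QQ by auto
          show ?thesis
          proof (cases "R = A \<union> B")
            case True
            then show ?thesis using P dA by auto
          next
            case False
            then have "R \<in> Q" using PR unfolding QQ by auto
            then show ?thesis using P PR(3) pd(3) by simp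
          qed
        qed
      qed
    qed
    have "sameR Q \<union> adj (insert e C) \<subseteq> sameR Q' \<union> adj C"
    proof
      fix z assume "z \<in> sameR Q \<union> adj (insert e C)"
      then consider (s) "z \<in> sameR Q" | (c) "z \<in> adj C" | (e) "z = (a, b) \<or> z = (b, a)"
      proof -
        obtain x y where z: "z = (x, y)" by force
        have "z \<in> sameR Q \<or> z \<in> adj C \<or> {x, y} = e"
          using \<open>z \<in> sameR Q \<union> adj (insert e C)\<close> z unfolding adj_def by auto
        then have "z \<in> sameR Q \<or> z \<in> adj C \<or> {x, y} = {a, b}" using eab(1) by simp
        then show thesis using that z by (metis doubleton_eq_iff)
      qed
      then show "z \<in> sameR Q' \<union> adj C"
      proof cases
        case s
        then obtain D x y where D: "D \<in> Q" "x \<in> D" "y \<in> D" "z = (x, y)" unfolding sameR_def by auto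
        show ?thesis
        proof (cases "D \<in> {A, B}")
          case True
          then have "x \<in> A \<union> B" "y \<in> A \<union> B" using D by auto
          have "A \<union> B \<in> Q'" unfolding Q'_def by simp
          then have "(x, y) \<in> sameR Q'" using sameR_I \<open>x \<in> A \<union> B\<close> \<open>y \<in> A \<union> B\<close> by metis
          then show ?thesis using D(4) by simp
        next
          case False
          then have "D \<in> Q'" using D unfolding Q'_def by auto
          then have "(x, y) \<in> sameR Q'" using sameR_I D(2,3) by metis
          then show ?thesis using D(4) by simp
        qed
      next
        case c then show ?thesis by blast
      next
        case e
        have "A \<union> B \<in> Q'" unfolding Q'_def by simp
        then have "(a, b) \<in> sameR Q'" "(b, a) \<in> sameR Q'" using sameR_I A(2) B(2) by (metis UnI1 UnI2)+
        then show ?thesis using e by auto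
      qed
    qed
    then have "(sameR Q \<union> adj (insert e C))\<^sup>* \<subseteq> (sameR Q' \<union> adj C)\<^sup>*"
      by (rule rtrancl_mono)
    then have "\<forall>x\<in>V. \<forall>y\<in>V. (x, y) \<in> (sameR Q' \<union> adj C)\<^sup>*"
      using insert(7) by (meson subsetD)
    then have "card Q' \<le> card C + 1" using insert.IH[OF insert(4) CV part] by blast
    moreover have "card Q' = card Q - 1"
    proof -
      have c1: "card Q' = card (Q - {A, B}) + 1" unfolding Q'_def using nAB fQ by simp
      have c2: "card (Q - {A, B}) = card Q - 2" using A B False fQ by (simp add: card_Diff_subset)
      have "{A, B} \<subseteq> Q" using A B by simp
      then have "card {A, B} \<le> card Q" using fQ by (rule card_mono[rotated])
      then have "card Q \<ge> 2" using False by simp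
      then show ?thesis using c1 c2 by simp
    qed
    ultimately show ?thesis using insert(1,2) by simp
  qed
qed

lemma cross_tree:
  assumes "spanning_tree V T" "is_partition V Q"
  shows "card Q \<le> card (T - intra Q T) + 1"
proof -
  have fV: "finite V" using assms(1) unfolding spanning_tree_def by simp
  have TV: "T \<subseteq> edges_on V" using assms(1) unfolding spanning_tree_def by simp
  have fE: "finite (edges_on V)"
  proof -
    have "edges_on V \<subseteq> Pow V" unfolding edges_on_def by auto
    then show ?thesis using fV finite_subset by blast
  qed
  have fC: "finite (T - intra Q T)" using TV fE finite_subset by blast
  have "adj T \<subseteq> sameR Q \<union> adj (T - intra Q T)"
    unfolding adj_def sameR_def intra_def by auto
  then have "(adj T)\<^sup>* \<subseteq> (sameR Q \<union> adj (T - intra Q T))\<^sup>*"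
    by (rule rtrancl_mono)
  then have "\<forall>x\<in>V. \<forall>y\<in>V. (x, y) \<in> (sameR Q \<union> adj (T - intra Q T))\<^sup>*"
    using assms(1) unfolding spanning_tree_def by (meson subsetD)
  then show ?thesis using cross_count[OF fC fV _ assms(2)] TV by blast
qed



locale inst =
  fixes l p :: nat and \<epsilon> :: real
  assumes p0: "p > 0" and l0: "l > 0" and e0: "0 < \<epsilon>" and e1: "\<epsilon> < 1"
begin

definition q :: nat where "q = Suc l"
definition X :: "nat set" where "X = {..<p*q}"
definition cl :: "nat \<Rightarrow> nat" where "cl x = (if x mod q = 0 then 0 else Suc (x div q))"
definition d :: "nat \<Rightarrow> nat \<Rightarrow> real" where
  "d x y = (if x = y then 0 else if cl x = cl y then \<epsilon> else 1)"
definition Pa :: "nat \<Rightarrow> nat set" where "Pa i = {x. x div q = i}"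
definition Pt :: "nat set set" where "Pt = Pa ` {..<p}"
definition R :: "nat set \<Rightarrow> nat set" where "R A = {x\<in>A. x mod q \<noteq> 0}"
definition T :: "nat set \<Rightarrow> nat set set" where "T A = star (Suc (Min A)) A"
definition Et where "Et = forest_edges Pt T"
definition U where "U = (\<lambda>i. i*q) ` {..<p}"
definition S0 where "S0 = Et \<union> star 0 U"
definition WF :: real where "WF = real p + real p * (real l - 1) * \<epsilon>"
definition OPT :: real where "OPT = real p + \<epsilon> * (real p * real l - 1)"
definition K where "K = (\<lambda>c. {x\<in>X. cl x = c}) ` {..p}"

lemma q2: "q \<ge> 2" using l0 unfolding q_def by simp
lemma q0[simp]: "q > 0" using q2 by simp
lemma ql: "q = l + 1" unfolding q_def by simp

lemma X_iff: "x \<in> X \<longleftrightarrow> x div q < p"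
  unfolding X_def using div_less_iff_less_mult[OF q0, of x p] by (simp add: mult.commute)

lemma div_iff: "x div q = i \<longleftrightarrow> i*q \<le> x \<and> x < i*q + q"
proof
  assume h: "x div q = i"
  have "x div q * q \<le> x" by (rule div_times_less_eq_dividend)
  moreover have "x < q + x div q * q" by (rule dividend_less_div_times) simp
  ultimately show "i*q \<le> x \<and> x < i*q + q" using h by simp
next
  assume h: "i*q \<le> x \<and> x < i*q + q"
  show "x div q = i"
  proof (rule div_nat_eqI)
    show "q * i \<le> x" using h by (simp add: mult.commute)
    show "x < q * Suc i" using h by (simp add: mult.commute)
  qed
qed

lemma Pa_int: "Pa i = {i*q..<i*q+q}"
  unfolding Pa_def div_iff by auto

lemma card_Pa: "card (Pa i) = q" unfolding Pa_int by simp

lemma fin_Pa: "finite (Pa i)" unfolding Pa_int by simp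

lemma Pa_X: "i < p \<Longrightarrow> Pa i \<subseteq> X" using X_iff unfolding Pa_def by auto

lemma iq_Pa: "i * q \<in> Pa i" unfolding Pa_int by simp
lemma iq1_Pa: "Suc (i * q) \<in> Pa i" unfolding Pa_int using q2 by simp

lemma Min_Pa: "Min (Pa i) = i * q"
  unfolding Pa_int by (rule Min_eqI) auto

lemma Pa_inj: "inj_on Pa {..<p}"
proof (rule inj_onI)
  fix i j assume "Pa i = Pa j"
  have "i * q \<in> Pa i" by (rule iq_Pa)
  then have "i * q \<in> Pa j" using \<open>Pa i = Pa j\<close> by simp
  then show "i = j" unfolding Pa_def by simp
qed

lemma Pa_disj: "i \<noteq> j \<Longrightarrow> Pa i \<inter> Pa j = {}" unfolding Pa_def by auto

lemma Pt_part: "is_partition X Pt"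
  unfolding is_partition_def Pt_def
proof (intro conjI ballI impI)
  fix P assume "P \<in> Pa ` {..<p}"
  then obtain i where "P = Pa i" by auto
  then show "P \<noteq> {}" using iq_Pa[of i] by auto
next
  show "\<Union> (Pa ` {..<p}) = X"
  proof
    show "\<Union> (Pa ` {..<p}) \<subseteq> X" using Pa_X by auto
    show "X \<subseteq> \<Union> (Pa ` {..<p})"
    proof
      fix x assume "x \<in> X"
      then have "x div q < p" "x \<in> Pa (x div q)" using X_iff unfolding Pa_def by auto
      then show "x \<in> \<Union> (Pa ` {..<p})" by blast
    qed
  qed
next
  fix P Q assume "P \<in> Pa ` {..<p}" "Q \<in> Pa ` {..<p}" "P \<noteq> Q"
  then obtain i j where "P = Pa i" "Q = Pa j" "i \<noteq> j" by auto
  then show "P \<inter> Q = {}" using Pa_disj by simp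
qed

lemma card_Pt: "card Pt = p" unfolding Pt_def using Pa_inj by (simp add: card_image)

lemma fin_X: "finite X" unfolding X_def by simp
lemma fin_Pt: "finite Pt" unfolding Pt_def by simp

lemma mod_iq1: "Suc (i * q) mod q = 1"
proof -
  have "Suc (i * q) mod q = (1 + i * q) mod q" by simp
  also have "\<dots> = 1 mod q" by (metis mod_mult_self2 mult.commute)
  also have "\<dots> = 1" using q2 by simp
  finally show ?thesis .
qed
lemma div_iq1: "Suc (i * q) div q = i" using iq1_Pa unfolding Pa_def by simp

lemma T_Pa: "T (Pa i) = star (Suc (i*q)) (Pa i)" unfolding T_def Min_Pa by simp

lemma T_sp: "A \<in> Pt \<Longrightarrow> spanning_tree A (T A)"
proof -
  assume "A \<in> Pt"
  then obtain i where A: "A = Pa i" unfolding Pt_def by auto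
  show ?thesis unfolding A T_Pa by (rule star_spanning[OF fin_Pa iq1_Pa])
qed

lemma dsym: "d x y = d y x" unfolding d_def by auto

lemma d_tri: "d x z \<le> d x y + d y z"
proof -
  have ge: "d a b \<ge> 0" for a b unfolding d_def using e0 by auto
  show ?thesis
  proof (cases "x = z")
    case True then show ?thesis using ge[of x y] ge[of y z] unfolding d_def[of x z] by simp
  next
    case xz: False
    show ?thesis
    proof (cases "y = x \<or> y = z")
      case True then show ?thesis using ge[of x y] ge[of y z] unfolding d_def[of x x] d_def[of z z] by auto
    next
      case False
      then have "d x y \<ge> \<epsilon>" "d y z \<ge> \<epsilon>" "d x y = 1 \<or> d y z = 1 \<or> cl x = cl z"
        unfolding d_def using e1 by auto
      moreover have "d x z \<le> 1" "cl x = cl z \<Longrightarrow> d x z = \<epsilon>" unfolding d_def using e0 e1 xz by auto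
      ultimately show ?thesis using e0
      proof -
        assume a: "d x y \<ge> \<epsilon>" "d y z \<ge> \<epsilon>" "d x y = 1 \<or> d y z = 1 \<or> cl x = cl z"
          "d x z \<le> 1" "cl x = cl z \<Longrightarrow> d x z = \<epsilon>"
        from a(3) show ?thesis
        proof (elim disjE)
          assume "d x y = 1" then show ?thesis using a(2,4) e0 by linarith
        next
          assume "d y z = 1" then show ?thesis using a(1,4) e0 by linarith
        next
          assume "cl x = cl z" then show ?thesis using a(1,2,5) e0 by linarith
        qed
      qed
    qed
  qed
qed

lemma metric: "metric_on X d"
  unfolding metric_on_def
proof (intro conjI ballI)
  fix x y assume "x \<in> X" "y \<in> X"
  show "(d x y = 0) = (x = y)" unfolding d_def using e0 by auto
  show "d x y = d y x" by (rule dsym)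
next
  fix x y z
  show "d x z \<le> d x y + d y z" by (rule d_tri)
qed

lemma d_ge: "x \<noteq> y \<Longrightarrow> d x y \<ge> \<epsilon>" unfolding d_def using e1 by auto

lemma cl_Pa: "x \<in> Pa i \<Longrightarrow> x \<noteq> i * q \<Longrightarrow> cl x = Suc i"
proof -
  assume h: "x \<in> Pa i" "x \<noteq> i * q"
  then have xd: "x div q = i" unfolding Pa_def by simp
  have "x mod q \<noteq> 0"
  proof
    assume "x mod q = 0"
    then have "x = x div q * q" using div_mult_mod_eq[of x q] by simp
    then show False using h(2) xd by simp
  qed
  then show ?thesis unfolding cl_def using xd by simp
qed

lemma cl_iq: "cl (i * q) = 0" unfolding cl_def by simp

lemma wt_T: "A \<in> Pt \<Longrightarrow> wt (sym2 d) (T A) = 1 + (real l - 1) * \<epsilon>"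
proof -
  assume "A \<in> Pt"
  then obtain i where A: "A = Pa i" unfolding Pt_def by auto
  let ?c = "Suc (i * q)"
  have "wt (sym2 d) (T A) = (\<Sum>x\<in>Pa i - {?c}. d ?c x)"
    unfolding A T_Pa by (rule wt_star[OF fin_Pa dsym])
  also have "Pa i - {?c} = insert (i*q) (Pa i - {?c, i*q})" using iq_Pa by auto
  also have "(\<Sum>x\<in>insert (i*q) (Pa i - {?c, i*q}). d ?c x) = d ?c (i*q) + (\<Sum>x\<in>Pa i - {?c, i*q}. d ?c x)"
    by (rule sum.insert) (auto simp: fin_Pa)
  also have "d ?c (i*q) = 1" unfolding d_def using cl_iq[of i] cl_Pa[OF iq1_Pa] by simp
  also have "(\<Sum>x\<in>Pa i - {?c, i*q}. d ?c x) = (\<Sum>x\<in>Pa i - {?c, i*q}. \<epsilon>)"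
  proof (rule sum.cong)
    fix x assume "x \<in> Pa i - {?c, i*q}"
    then show "d ?c x = \<epsilon>" unfolding d_def using cl_Pa[OF iq1_Pa] cl_Pa[of x i] by auto
  qed simp
  finally have eq: "wt (sym2 d) (T A) = 1 + (\<Sum>x\<in>Pa i - {?c, i*q}. \<epsilon>)" .
  have sub: "{?c, i*q} \<subseteq> Pa i" using iq_Pa iq1_Pa by simp
  have c2: "card {?c, i*q} = 2" by simp
  have "card (Pa i - {?c, i*q}) = card (Pa i) - card {?c, i*q}"
    by (rule card_Diff_subset[OF _ sub]) simp
  also have "\<dots> = l - 1" unfolding c2 card_Pa ql by simp
  finally have cd: "card (Pa i - {?c, i*q}) = l - 1" .
  have "(\<Sum>x\<in>Pa i - {?c, i*q}. \<epsilon>) = real (l - 1) * \<epsilon>" unfolding sum_constant cd by simp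
  also have "real (l - 1) = real l - 1" using l0 by (simp add: of_nat_diff)
  finally show ?thesis unfolding eq by simp
qed


lemma edges_on_mono: "A \<subseteq> B \<Longrightarrow> edges_on A \<subseteq> edges_on B"
  unfolding edges_on_def by blast

lemma adj_mono: "A \<subseteq> B \<Longrightarrow> adj A \<subseteq> adj B"
  unfolding adj_def by blast

lemma fin_edges: "finite V \<Longrightarrow> finite (edges_on V)"
proof -
  assume "finite V"
  moreover have "edges_on V \<subseteq> Pow V" unfolding edges_on_def by auto
  ultimately show ?thesis using finite_subset by blast
qed

lemma Pt_cases: "A \<in> Pt \<Longrightarrow> (\<And>i. i < p \<Longrightarrow> A = Pa i \<Longrightarrow> thesis) \<Longrightarrow> thesis"
  unfolding Pt_def by auto

lemma T_edges: "A \<in> Pt \<Longrightarrow> T A \<subseteq> edges_on A"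
  using T_sp unfolding spanning_tree_def by blast

lemma T_card: "A \<in> Pt \<Longrightarrow> card (T A) = l"
proof -
  assume A: "A \<in> Pt"
  then have "card (T A) = card A - 1" using T_sp unfolding spanning_tree_def by blast
  moreover obtain i where "A = Pa i" using A by (rule Pt_cases)
  ultimately show ?thesis using card_Pa ql by simp
qed

lemma fin_T: "A \<in> Pt \<Longrightarrow> finite (T A)"
proof -
  assume A: "A \<in> Pt"
  then obtain i where "A = Pa i" by (rule Pt_cases)
  then have "finite A" using fin_Pa by simp
  then show ?thesis using T_edges[OF A] fin_edges finite_subset by blast
qed

lemma edge_in: "e \<in> edges_on V \<Longrightarrow> x \<in> e \<Longrightarrow> x \<in> V"
  unfolding edges_on_def by auto

lemma T_disj: "A \<in> Pt \<Longrightarrow> B \<in> Pt \<Longrightarrow> A \<noteq> B \<Longrightarrow> T A \<inter> T B = {}"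
proof (rule ccontr)
  assume A: "A \<in> Pt" and B: "B \<in> Pt" and AB: "A \<noteq> B" and ne: "T A \<inter> T B \<noteq> {}"
  then obtain e where e: "e \<in> T A" "e \<in> T B" by blast
  have "e \<in> edges_on A" using e(1) T_edges[OF A] by blast
  then obtain x y where "e = {x, y}" unfolding edges_on_def by blast
  then have xe: "x \<in> e" by simp
  have "e \<in> edges_on B" using e(2) T_edges[OF B] by blast
  then have "x \<in> A" "x \<in> B" using edge_in[OF \<open>e \<in> edges_on A\<close> xe] edge_in[of e B x] xe by auto
  moreover have "A \<inter> B = {}" using partD(3)[OF Pt_part A B AB] .
  ultimately show False by blast
qed

lemma wt_Et: "wt (sym2 d) Et = WF"
proof -
  have "wt (sym2 d) Et = (\<Sum>A\<in>Pt. wt (sym2 d) (T A))"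
    unfolding wt_def Et_def forest_edges_def
    by (rule sum.UNION_disjoint) (use fin_Pt fin_T T_disj in auto)
  also have "\<dots> = (\<Sum>A\<in>Pt. 1 + (real l - 1) * \<epsilon>)" by (rule sum.cong) (simp_all add: wt_T)
  also have "\<dots> = WF" unfolding WF_def card_Pt sum_constant by (simp add: algebra_simps)
  finally show ?thesis .
qed

lemma card_Et: "card Et = p * l"
proof -
  have "card Et = (\<Sum>A\<in>Pt. card (T A))"
    unfolding Et_def forest_edges_def
    by (rule card_UN_disjoint) (use fin_Pt fin_T T_disj in auto)
  also have "\<dots> = (\<Sum>A\<in>Pt. l)" by (rule sum.cong) (simp_all add: T_card)
  finally show ?thesis using card_Pt by simp
qed

lemma fin_Et: "finite Et"
  unfolding Et_def forest_edges_def by (rule finite_UN_I[OF fin_Pt fin_T])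

lemma Et_intra: "e \<in> Et \<Longrightarrow> \<exists>A\<in>Pt. e \<subseteq> A"
proof -
  assume "e \<in> Et"
  then obtain A where A: "A \<in> Pt" "e \<in> T A" unfolding Et_def forest_edges_def by blast
  then have "e \<in> edges_on A" using T_edges[OF A(1)] by blast
  then have "e \<subseteq> A" using edge_in[of e A] by blast
  then show ?thesis using A by blast
qed

lemma Pt_X: "A \<in> Pt \<Longrightarrow> A \<subseteq> X"
proof -
  assume "A \<in> Pt"
  then obtain i where "i < p" "A = Pa i" by (rule Pt_cases)
  then show ?thesis using Pa_X by simp
qed

lemma Et_sub: "Et \<subseteq> edges_on X"
proof
  fix e assume "e \<in> Et"
  then obtain A where A: "A \<in> Pt" "e \<in> T A" unfolding Et_def forest_edges_def by blast
  then show "e \<in> edges_on X" using T_edges[OF A(1)] edges_on_mono[OF Pt_X[OF A(1)]] by blast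
qed

lemma U_X: "U \<subseteq> X" unfolding U_def using Pa_X iq_Pa by blast
lemma U0: "0 \<in> U" unfolding U_def using p0 by force
lemma fin_U: "finite U" unfolding U_def by simp
lemma card_U: "card U = p"
proof -
  have "inj_on (\<lambda>i. i * q) {..<p}" by (rule inj_onI) (use q0 in simp)
  then show ?thesis unfolding U_def by (simp add: card_image)
qed

lemma star0_cross: "e \<in> star 0 U \<Longrightarrow> A \<in> Pt \<Longrightarrow> \<not> e \<subseteq> A"
proof
  assume e: "e \<in> star 0 U" and A: "A \<in> Pt" and sub: "e \<subseteq> A"
  obtain j where j: "A = Pa j" using A by (rule Pt_cases)
  obtain x where x: "e = {0, x}" "x \<in> U" "x \<noteq> 0" using e unfolding star_def by blast
  obtain i where i: "x = i * q" using x(2) unfolding U_def by blast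
  have "0 \<in> Pa j" "i * q \<in> Pa j" using sub x i j by auto
  then have "j = 0" "i = j" unfolding Pa_def by simp_all
  then show False using x(3) i by simp
qed

lemma Et_star_disj: "Et \<inter> star 0 U = {}"
  using Et_intra star0_cross by blast

lemma S0_sp: "spanning_tree X S0"
proof -
  have spU: "spanning_tree U (star 0 U)" by (rule star_spanning[OF fin_U U0])
  have sU: "star 0 U \<subseteq> edges_on U" using spU unfolding spanning_tree_def by simp
  have cU: "\<forall>x\<in>U. \<forall>y\<in>U. (x, y) \<in> (adj (star 0 U))\<^sup>*" using spU unfolding spanning_tree_def by simp
  have sub: "S0 \<subseteq> edges_on X"
    unfolding S0_def using Et_sub sU edges_on_mono[OF U_X] by (rule Un_least[OF _ subset_trans])
  have to0: "(x, 0) \<in> (adj S0)\<^sup>*" if x: "x \<in> X" for x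
  proof -
    define i where "i = x div q"
    have ip: "i < p" using x X_iff i_def by simp
    have xP: "x \<in> Pa i" unfolding Pa_def i_def by simp
    have PaPt: "Pa i \<in> Pt" unfolding Pt_def using ip by simp
    have cP: "\<forall>x\<in>Pa i. \<forall>y\<in>Pa i. (x, y) \<in> (adj (T (Pa i)))\<^sup>*"
      using T_sp[OF PaPt] unfolding spanning_tree_def by simp
    have "(x, i * q) \<in> (adj (T (Pa i)))\<^sup>*" using cP xP iq_Pa by simp
    moreover have "T (Pa i) \<subseteq> S0" unfolding S0_def Et_def forest_edges_def using PaPt by blast
    then have "(adj (T (Pa i)))\<^sup>* \<subseteq> (adj S0)\<^sup>*" by (intro rtrancl_mono adj_mono)
    ultimately have 1: "(x, i * q) \<in> (adj S0)\<^sup>*" by (rule subsetD[rotated])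
    have "i * q \<in> U" unfolding U_def using ip by blast
    then have "(i * q, 0) \<in> (adj (star 0 U))\<^sup>*" using cU U0 by simp
    moreover have "star 0 U \<subseteq> S0" unfolding S0_def by (rule Un_upper2)
    then have "(adj (star 0 U))\<^sup>* \<subseteq> (adj S0)\<^sup>*" by (intro rtrancl_mono adj_mono)
    ultimately have 2: "(i * q, 0) \<in> (adj S0)\<^sup>*" by (rule subsetD[rotated])
    show ?thesis using 1 2 by (rule rtrancl_trans)
  qed
  have conn: "\<forall>x\<in>X. \<forall>y\<in>X. (x, y) \<in> (adj S0)\<^sup>*"
  proof (intro ballI)
    fix x y assume xy: "x \<in> X" "y \<in> X"
    have "(x, 0) \<in> (adj S0)\<^sup>*" using to0[OF xy(1)] .
    moreover have "(0, y) \<in> (adj S0)\<^sup>*" using rt_sym[OF to0[OF xy(2)]] .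
    ultimately show "(x, y) \<in> (adj S0)\<^sup>*" by (rule rtrancl_trans)
  qed
  have fs: "finite (star 0 U)" using sU fin_edges[OF fin_U] by (rule finite_subset)
  have "card S0 = card Et + card (star 0 U)"
    unfolding S0_def by (rule card_Un_disjoint[OF fin_Et fs Et_star_disj])
  also have "card (star 0 U) = p - 1" using spU card_U unfolding spanning_tree_def by simp
  finally have "card S0 = p * l + (p - 1)" using card_Et by simp
  also have "\<dots> = card X - 1" unfolding X_def ql using p0 by (simp add: algebra_simps)
  finally have cS: "card S0 = card X - 1" .
  have "X \<noteq> {}" using U0 U_X by blast
  then show ?thesis unfolding spanning_tree_def using fin_X sub conn cS by simp
qed


lemma cl_U: "x \<in> U \<Longrightarrow> cl x = 0"
  unfolding U_def using cl_iq by auto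

lemma wt_star0: "wt (sym2 d) (star 0 U) = (real p - 1) * \<epsilon>"
proof -
  have "wt (sym2 d) (star 0 U) = (\<Sum>x\<in>U - {0}. d 0 x)" by (rule wt_star[OF fin_U dsym])
  also have "\<dots> = (\<Sum>x\<in>U - {0}. \<epsilon>)"
  proof (rule sum.cong)
    fix x assume x: "x \<in> U - {0}"
    then have "cl x = cl 0" using cl_U U0 by simp
    then show "d 0 x = \<epsilon>" unfolding d_def using x by simp
  qed simp
  also have "\<dots> = real (card (U - {0})) * \<epsilon>" by simp
  also have "card (U - {0}) = p - 1" using card_U U0 fin_U by simp
  also have "real (p - 1) = real p - 1" using p0 by (simp add: of_nat_diff)
  finally show ?thesis .
qed

lemma WF_OPT: "WF + (real p - 1) * \<epsilon> = OPT"
  unfolding WF_def OPT_def by (simp add: algebra_simps)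

lemma wt_S0: "wt (sym2 d) S0 = OPT"
proof -
  have fs: "finite (star 0 U)"
    using star_spanning[OF fin_U U0] fin_edges[OF fin_U] finite_subset
    unfolding spanning_tree_def by blast
  have "wt (sym2 d) S0 = wt (sym2 d) Et + wt (sym2 d) (star 0 U)"
    unfolding S0_def wt_def by (rule sum.union_disjoint[OF fin_Et fs Et_star_disj])
  then show ?thesis using wt_Et wt_star0 WF_OPT by simp
qed

lemma intra_S0: "intra Pt S0 = Et"
  unfolding intra_def S0_def using Et_intra star0_cross by blast

definition Kc :: "nat \<Rightarrow> nat set" where "Kc c = {x\<in>X. cl x = c}"

lemma K_def2: "K = Kc ` {..p}" unfolding K_def Kc_def by simp

lemma cl_X: "x \<in> X \<Longrightarrow> cl x \<le> p"
  unfolding cl_def using X_iff by auto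

lemma Kc_ne: "c \<le> p \<Longrightarrow> \<exists>x. x \<in> Kc c"
proof (cases c)
  case 0
  then show ?thesis unfolding Kc_def using U0 U_X cl_U by blast
next
  case (Suc i)
  assume "c \<le> p"
  then have ip: "i < p" using Suc by simp
  have "Suc (i * q) \<in> X" using Pa_X[OF ip] iq1_Pa by blast
  moreover have "cl (Suc (i * q)) = Suc i" by (rule cl_Pa[OF iq1_Pa]) simp
  ultimately show ?thesis unfolding Kc_def Suc by blast
qed

lemma K_part: "is_partition X K"
  unfolding is_partition_def K_def2
proof (intro conjI ballI impI)
  fix P assume "P \<in> Kc ` {..p}"
  then obtain c where "c \<le> p" "P = Kc c" by auto
  then show "P \<noteq> {}" using Kc_ne by blast
next
  show "\<Union> (Kc ` {..p}) = X"
  proof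
    show "\<Union> (Kc ` {..p}) \<subseteq> X" unfolding Kc_def by auto
    show "X \<subseteq> \<Union> (Kc ` {..p})"
    proof
      fix x assume x: "x \<in> X"
      then have "x \<in> Kc (cl x)" "cl x \<le> p" unfolding Kc_def using cl_X by auto
      then show "x \<in> \<Union> (Kc ` {..p})" by blast
    qed
  qed
next
  fix P Q assume "P \<in> Kc ` {..p}" "Q \<in> Kc ` {..p}" "P \<noteq> Q"
  then obtain c c' where "P = Kc c" "Q = Kc c'" "c \<noteq> c'" by auto
  then show "P \<inter> Q = {}" unfolding Kc_def by auto
qed

lemma card_K: "card K = p + 1"
proof -
  have "inj_on Kc {..p}"
  proof (rule inj_onI)
    fix c c' assume c: "c \<in> {..p}" "c' \<in> {..p}" "Kc c = Kc c'"
    obtain x where "x \<in> Kc c" using Kc_ne c(1) by auto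
    then have "x \<in> Kc c'" using c(3) by simp
    then show "c = c'" using \<open>x \<in> Kc c\<close> unfolding Kc_def by simp
  qed
  then show ?thesis unfolding K_def2 by (simp add: card_image)
qed

lemma K_same: "{x, y} \<subseteq> k \<Longrightarrow> k \<in> K \<Longrightarrow> cl x = cl y"
  unfolding K_def2 Kc_def by auto

lemma edge_wt: "e \<in> edges_on X \<Longrightarrow> \<exists>x y. e = {x, y} \<and> x \<noteq> y \<and> x \<in> X \<and> y \<in> X \<and> sym2 d e = d x y"
  unfolding edges_on_def using sym2_eq[of d, OF dsym] by blast

lemma edge_ge: "e \<in> edges_on X \<Longrightarrow> sym2 d e \<ge> \<epsilon>"
proof -
  assume "e \<in> edges_on X"
  then obtain x y where xy: "x \<noteq> y" "sym2 d e = d x y" using edge_wt by blast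
  then show ?thesis using d_ge[OF xy(1)] by simp
qed

lemma edge_cross1: "e \<in> edges_on X \<Longrightarrow> \<not> (\<exists>k\<in>K. e \<subseteq> k) \<Longrightarrow> sym2 d e = 1"
proof -
  assume e: "e \<in> edges_on X" and nk: "\<not> (\<exists>k\<in>K. e \<subseteq> k)"
  obtain x y where xy: "e = {x, y}" "x \<noteq> y" "x \<in> X" "y \<in> X" "sym2 d e = d x y"
    using edge_wt[OF e] by (elim exE conjE)
  have "cl x \<noteq> cl y"
  proof
    assume "cl x = cl y"
    then have "{x, y} \<subseteq> Kc (cl x)" unfolding Kc_def using xy by auto
    moreover have "Kc (cl x) \<in> K" unfolding K_def2 using cl_X xy(3) by simp
    ultimately show False using nk xy(1) by blast
  qed
  then show ?thesis unfolding xy(5) d_def using xy(2) by simp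
qed

lemma lower: "spanning_tree X S \<Longrightarrow> OPT \<le> wt (sym2 d) S"
proof -
  assume sp: "spanning_tree X S"
  have SX: "S \<subseteq> edges_on X" using sp unfolding spanning_tree_def by simp
  have fS: "finite S" using SX fin_edges[OF fin_X] by (rule finite_subset)
  define Cr where "Cr = S - intra K S"
  have Cr_sub: "Cr \<subseteq> S" unfolding Cr_def by blast
  have cC: "p + 1 \<le> card Cr + 1" using cross_tree[OF sp K_part] card_K unfolding Cr_def by simp
  have cS: "card S = p * q - 1" using sp unfolding spanning_tree_def X_def by simp
  have w1: "sym2 d e = 1" if "e \<in> Cr" for e
  proof (rule edge_cross1)
    show "e \<in> edges_on X" using that Cr_sub SX by blast
    show "\<not> (\<exists>k\<in>K. e \<subseteq> k)" using that unfolding Cr_def intra_def by blast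
  qed
  have w2: "sym2 d e \<ge> \<epsilon>" if "e \<in> S - Cr" for e using that SX edge_ge by blast
  have A: "wt (sym2 d) S = (\<Sum>e\<in>Cr. sym2 d e) + (\<Sum>e\<in>S - Cr. sym2 d e)"
    unfolding wt_def sum.subset_diff[OF Cr_sub fS] by (rule add.commute)
  have B: "(\<Sum>e\<in>Cr. sym2 d e) = real (card Cr)" using w1 by simp
  have C: "(\<Sum>e\<in>S - Cr. \<epsilon>) \<le> (\<Sum>e\<in>S - Cr. sym2 d e)" using w2 by (rule sum_mono)
  have "wt (sym2 d) S \<ge> real (card Cr) + real (card (S - Cr)) * \<epsilon>" using A B C by simp
  moreover have "card (S - Cr) = card S - card Cr" by (rule card_Diff_subset[OF finite_subset[OF Cr_sub fS] Cr_sub])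
  moreover have "card Cr \<le> card S" using Cr_sub fS by (rule card_mono[rotated])
  ultimately have "wt (sym2 d) S \<ge> real (card Cr) + (real (card S) - real (card Cr)) * \<epsilon>"
    by (simp add: of_nat_diff)
  moreover have "real (card S) = real p * (real l + 1) - 1"
  proof -
    have "p * q \<ge> 1" using p0 q0 by (simp add: Suc_le_eq)
    then show ?thesis unfolding cS ql by (simp add: of_nat_diff algebra_simps)
  qed
  moreover have "real (card Cr) \<ge> real p" using cC by simp
  ultimately show ?thesis unfolding OPT_def using e1
  proof -
    assume a: "wt (sym2 d) S \<ge> real (card Cr) + (real (card S) - real (card Cr)) * \<epsilon>"
      "real (card S) = real p * (real l + 1) - 1" "real (card Cr) \<ge> real p"
    have "(1 - \<epsilon>) * real (card Cr) \<ge> (1 - \<epsilon>) * real p" using a(3) e1 by simp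
    then show "real p + \<epsilon> * (real p * real l - 1) \<le> wt (sym2 d) S" using a(1,2)
      by (simp add: algebra_simps)
  qed
qed


lemma Et_fe: "forest_edges Pt T = Et" unfolding Et_def ..

lemma mfc_S0: "mfc_opt X d Pt T S0"
  unfolding mfc_opt_def Et_fe
proof (intro conjI allI impI)
  show "spanning_tree X S0" by (rule S0_sp)
  show "Et \<subseteq> S0" unfolding S0_def by (rule Un_upper1)
  fix S' assume "spanning_tree X S' \<and> Et \<subseteq> S'"
  then show "wt (sym2 d) S0 \<le> wt (sym2 d) S'" using lower wt_S0 by simp
qed

lemma mfc_mst: "mfc_opt X d Pt T S \<Longrightarrow> is_mst X (sym2 d) S \<and> wt (sym2 d) S = OPT"
proof -
  assume m: "mfc_opt X d Pt T S"
  have sp: "spanning_tree X S" using m unfolding mfc_opt_def by simp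
  have "wt (sym2 d) S \<le> wt (sym2 d) S0" using m S0_sp unfolding mfc_opt_def Et_fe S0_def by simp
  then have "wt (sym2 d) S \<le> OPT" using wt_S0 by simp
  moreover have "OPT \<le> wt (sym2 d) S" using lower[OF sp] .
  ultimately have eq: "wt (sym2 d) S = OPT" by simp
  have "is_mst X (sym2 d) S" unfolding is_mst_def using sp eq lower by simp
  then show ?thesis using eq by simp
qed

lemma S0_mst: "is_mst X (sym2 d) S0"
  unfolding is_mst_def using S0_sp wt_S0 lower by simp

lemma mst_wt: "is_mst X (sym2 d) S \<Longrightarrow> wt (sym2 d) S = OPT"
proof -
  assume m: "is_mst X (sym2 d) S"
  then have "wt (sym2 d) S \<le> wt (sym2 d) S0" using S0_sp unfolding is_mst_def by simp
  moreover have "OPT \<le> wt (sym2 d) S" using m lower unfolding is_mst_def by simp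
  ultimately show ?thesis using wt_S0 by simp
qed

lemma mst_intra: "is_mst X (sym2 d) S \<Longrightarrow> wt (sym2 d) (intra Pt S) \<le> WF"
proof -
  assume m: "is_mst X (sym2 d) S"
  have sp: "spanning_tree X S" using m unfolding is_mst_def by simp
  have SX: "S \<subseteq> edges_on X" using sp unfolding spanning_tree_def by simp
  have fS: "finite S" using SX fin_edges[OF fin_X] by (rule finite_subset)
  have isub: "intra Pt S \<subseteq> S" unfolding intra_def by blast
  have cC: "p \<le> card (S - intra Pt S) + 1" using cross_tree[OF sp Pt_part] card_Pt by simp
  have A: "wt (sym2 d) S = wt (sym2 d) (intra Pt S) + (\<Sum>e\<in>S - intra Pt S. sym2 d e)"
    unfolding wt_def sum.subset_diff[OF isub fS] by (rule add.commute)
  have w2: "sym2 d e \<ge> \<epsilon>" if "e \<in> S - intra Pt S" for e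
    using that SX edge_ge by blast
  have C: "(\<Sum>e\<in>S - intra Pt S. \<epsilon>) \<le> (\<Sum>e\<in>S - intra Pt S. sym2 d e)" using w2 by (rule sum_mono)
  have "real p - 1 \<le> real (card (S - intra Pt S))" using cC by linarith
  then have "(real p - 1) * \<epsilon> \<le> real (card (S - intra Pt S)) * \<epsilon>" using e0 by (simp add: mult_right_mono)
  then have "(real p - 1) * \<epsilon> \<le> (\<Sum>e\<in>S - intra Pt S. sym2 d e)" using C by simp
  then show ?thesis using A mst_wt[OF m] WF_OPT by linarith
qed

lemma WF_pos: "WF > 0"
proof -
  have "real l - 1 \<ge> 0" using l0 by simp
  then have "real p * (real l - 1) * \<epsilon> \<ge> 0" using e0 by simp
  then show ?thesis unfolding WF_def using p0 by linarith
qed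

lemma gamma1: "gamma X d Pt T = 1"
proof -
  let ?W = "{wt (sym2 d) (intra Pt S) | S. is_mst X (sym2 d) S}"
  have fin: "finite ?W"
  proof (rule finite_subset)
    show "?W \<subseteq> (\<lambda>S. wt (sym2 d) (intra Pt S)) ` Pow (edges_on X)"
      unfolding is_mst_def spanning_tree_def by blast
    show "finite ((\<lambda>S. wt (sym2 d) (intra Pt S)) ` Pow (edges_on X))"
      using fin_edges[OF fin_X] by simp
  qed
  have "wt (sym2 d) (intra Pt S0) = WF" using intra_S0 wt_Et by simp
  then have mem: "WF \<in> ?W" using S0_mst by (intro CollectI exI[of _ S0]) simp
  have "Max ?W = WF"
    by (rule Max_eqI[OF fin]) (use mst_intra mem in auto)
  then show ?thesis unfolding gamma_def Et_fe wt_Et using WF_pos by simp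
qed


lemma part_uniq: "z \<in> C \<Longrightarrow> z \<in> C' \<Longrightarrow> C \<in> Pt \<Longrightarrow> C' \<in> Pt \<Longrightarrow> C = C'"
  using partD(3)[OF Pt_part, of C C'] by blast

lemma R_Pa: "R (Pa j) = Pa j - {j * q}"
proof (intro set_eqI iffI)
  fix x assume "x \<in> R (Pa j)"
  then have x: "x \<in> Pa j" "x mod q \<noteq> 0" unfolding R_def by auto
  then show "x \<in> Pa j - {j * q}" by auto
next
  fix x assume x: "x \<in> Pa j - {j * q}"
  then have "cl x = Suc j" using cl_Pa by simp
  then have "x mod q \<noteq> 0" unfolding cl_def by (auto split: if_splits)
  then show "x \<in> R (Pa j)" unfolding R_def using x by simp
qed

lemma R_props: "A \<in> Pt \<Longrightarrow> R A \<subseteq> A \<and> card (R A) = l"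
proof -
  assume "A \<in> Pt"
  then obtain j where A: "A = Pa j" by (rule Pt_cases)
  have "card (Pa j - {j * q}) = l" using card_Pa iq_Pa fin_Pa ql by simp
  then show ?thesis unfolding A R_Pa by auto
qed

lemma cross_d1: "a \<in> Pa i \<Longrightarrow> b \<in> Pa j \<Longrightarrow> i \<noteq> j \<Longrightarrow> b \<noteq> j * q \<Longrightarrow> d a b = 1"
proof -
  assume a: "a \<in> Pa i" and b: "b \<in> Pa j" and ij: "i \<noteq> j" and bj: "b \<noteq> j * q"
  have "a \<noteq> b" using a b ij unfolding Pa_def by auto
  moreover have "cl b = Suc j" using cl_Pa[OF b bj] .
  moreover have "cl a \<noteq> Suc j"
  proof (cases "a = i * q")
    case True then show ?thesis using cl_iq by simp
  next
    case False then show ?thesis using cl_Pa[OF a] ij by simp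
  qed
  ultimately show ?thesis unfolding d_def by simp
qed

lemma setdist1: "(\<And>a b. a \<in> A \<Longrightarrow> b \<in> B \<Longrightarrow> d a b = 1) \<Longrightarrow> a0 \<in> A \<Longrightarrow> b0 \<in> B \<Longrightarrow> setdist d A B = 1"
proof -
  assume h: "\<And>a b. a \<in> A \<Longrightarrow> b \<in> B \<Longrightarrow> d a b = 1" and a0: "a0 \<in> A" and b0: "b0 \<in> B"
  have "{d a b | a b. a \<in> A \<and> b \<in> B} = {1}"
  proof
    show "{d a b | a b. a \<in> A \<and> b \<in> B} \<subseteq> {1}" using h by blast
    show "{1} \<subseteq> {d a b | a b. a \<in> A \<and> b \<in> B}" using h[OF a0 b0] a0 b0 by force
  qed
  then show ?thesis unfolding setdist_def by simp
qed

lemma what1: "A \<in> Pt \<Longrightarrow> B \<in> Pt \<Longrightarrow> A \<noteq> B \<Longrightarrow> what d R A B = 1"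
proof -
  assume A: "A \<in> Pt" and B: "B \<in> Pt" and AB: "A \<noteq> B"
  obtain i where i: "A = Pa i" using A by (rule Pt_cases)
  obtain j where j: "B = Pa j" using B by (rule Pt_cases)
  have ij: "i \<noteq> j" using AB i j by auto
  have "setdist d (Pa i) (R (Pa j)) = 1"
  proof (rule setdist1)
    show "i * q \<in> Pa i" by (rule iq_Pa)
    show "Suc (j * q) \<in> R (Pa j)" unfolding R_Pa using iq1_Pa by simp
    fix a b assume ab: "a \<in> Pa i" "b \<in> R (Pa j)"
    then show "d a b = 1" using cross_d1[OF ab(1) _ ij] unfolding R_Pa by simp
  qed
  moreover have "setdist d (Pa j) (R (Pa i)) = 1"
  proof (rule setdist1)
    show "j * q \<in> Pa j" by (rule iq_Pa)
    show "Suc (i * q) \<in> R (Pa i)" unfolding R_Pa using iq1_Pa by simp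
    fix a b assume ab: "a \<in> Pa j" "b \<in> R (Pa i)"
    then show "d a b = 1" using cross_d1[OF ab(1) _ ij[symmetric]] unfolding R_Pa by simp
  qed
  ultimately show ?thesis unfolding what_def i j by simp
qed

lemma what_sym: "what d R A B = what d R B A"
  unfolding what_def by (simp add: min.commute)

lemma wt_sp_Pt: "spanning_tree Pt M \<Longrightarrow> wt (sym2 (what d R)) M = real p - 1"
proof -
  assume sp: "spanning_tree Pt M"
  have "wt (sym2 (what d R)) M = (\<Sum>e\<in>M. 1)"
    unfolding wt_def
  proof (rule sum.cong)
    fix e assume "e \<in> M"
    then have "e \<in> edges_on Pt" using sp unfolding spanning_tree_def by blast
    then obtain A B where "e = {A, B}" "A \<in> Pt" "B \<in> Pt" "A \<noteq> B" unfolding edges_on_def by blast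
    then show "sym2 (what d R) e = 1" using sym2_eq[of "what d R", OF what_sym] what1 by simp
  qed simp
  also have "\<dots> = real (card M)" by simp
  also have "card M = p - 1" using sp card_Pt unfolding spanning_tree_def by simp
  finally show ?thesis using p0 by (simp add: of_nat_diff)
qed

definition M0 where "M0 = star (Pa 0) Pt"
definition rec0 :: "nat set set \<Rightarrow> nat \<times> nat" where "rec0 e = (Min (\<Union>e), Max (\<Union>e))"

lemma M0_mst: "is_mst Pt (sym2 (what d R)) M0"
proof -
  have "Pa 0 \<in> Pt" unfolding Pt_def using p0 by simp
  then have sp: "spanning_tree Pt M0" unfolding M0_def by (rule star_spanning[OF fin_Pt])
  then show ?thesis unfolding is_mst_def using wt_sp_Pt by simp
qed

lemma MinMax: "i < j \<Longrightarrow> Min (Pa i \<union> Pa j) = i * q \<and> Max (Pa i \<union> Pa j) = j * q + l"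
proof -
  assume ij: "i < j"
  have iqj: "i * q + q \<le> j * q"
  proof -
    have "Suc i \<le> j" using ij by simp
    then have "Suc i * q \<le> j * q" by (rule mult_le_mono1)
    then show ?thesis by (simp add: add.commute)
  qed
  have "Min (Pa i \<union> Pa j) = i * q"
    by (rule Min_eqI) (use iqj in \<open>auto simp: Pa_int fin_Pa\<close>)
  moreover have "Max (Pa i \<union> Pa j) = j * q + l"
    by (rule Max_eqI) (use iqj in \<open>auto simp: Pa_int fin_Pa ql\<close>)
  ultimately show ?thesis by simp
qed

lemma jql: "j * q + l \<in> R (Pa j)"
proof -
  have "j * q + l \<in> Pa j" unfolding Pa_int ql by simp
  moreover have "j * q + l \<noteq> j * q" using l0 by simp
  ultimately show ?thesis unfolding R_Pa by simp
qed

lemma rec0_ok: "i < j \<Longrightarrow> j < p \<Longrightarrow>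
   fst (rec0 {Pa i, Pa j}) \<in> Pa i \<and> snd (rec0 {Pa i, Pa j}) \<in> R (Pa j) \<and>
   d (fst (rec0 {Pa i, Pa j})) (snd (rec0 {Pa i, Pa j})) = what d R (Pa i) (Pa j)"
proof -
  assume ij: "i < j" and jp: "j < p"
  have r: "rec0 {Pa i, Pa j} = (i * q, j * q + l)" unfolding rec0_def using MinMax[OF ij] by simp
  have "d (i * q) (j * q + l) = 1"
    by (rule cross_d1[OF iq_Pa]) (use jql ij in \<open>auto simp: R_Pa\<close>)
  moreover have "Pa i \<noteq> Pa j"
  proof
    assume "Pa i = Pa j"
    then have "i * q \<in> Pa j" using iq_Pa[of i] by simp
    then show False using ij unfolding Pa_def by simp
  qed
  then have "what d R (Pa i) (Pa j) = 1"
    by (rule what1[rotated 2]) (use ij jp in \<open>auto simp: Pt_def\<close>)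
  ultimately show ?thesis unfolding r using iq_Pa jql by simp
qed

lemma rec0_cond: "P \<in> Pt \<Longrightarrow> Q \<in> Pt \<Longrightarrow> P \<noteq> Q \<Longrightarrow>
  (fst (rec0 {P, Q}) \<in> P \<and> snd (rec0 {P, Q}) \<in> R Q \<or>
         fst (rec0 {P, Q}) \<in> Q \<and> snd (rec0 {P, Q}) \<in> R P) \<and>
        d (fst (rec0 {P, Q})) (snd (rec0 {P, Q})) = what d R P Q"
proof -
  assume P: "P \<in> Pt" and Q: "Q \<in> Pt" and PQ: "P \<noteq> Q"
  obtain i where i: "P = Pa i" "i < p" using P by (rule Pt_cases) simp
  obtain j where j: "Q = Pa j" "j < p" using Q by (rule Pt_cases) simp
  have ij: "i \<noteq> j" using PQ i j by auto
  show ?thesis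
  proof (cases "i < j")
    case True
    then show ?thesis using rec0_ok[OF True j(2)] i j by simp
  next
    case False
    then have ji: "j < i" using ij by simp
    have "{P, Q} = {Pa j, Pa i}" using i j by auto
    then show ?thesis using rec0_ok[OF ji i(2)] i j what_sym by simp
  qed
qed

lemma output_exists: "multirep_output X d Pt T R (Et \<union> {{fst (rec0 e), snd (rec0 e)} | e. e \<in> M0})"
  unfolding multirep_output_def Et_fe
proof (rule exI[of _ rec0], rule exI[of _ M0], intro conjI)
  show "is_mst Pt (sym2 (what d R)) M0" by (rule M0_mst)
  show "\<forall>P\<in>Pt. \<forall>Q\<in>Pt. P \<noteq> Q \<longrightarrow>
    (fst (rec0 {P, Q}) \<in> P \<and> snd (rec0 {P, Q}) \<in> R Q \<or>
         fst (rec0 {P, Q}) \<in> Q \<and> snd (rec0 {P, Q}) \<in> R P) \<and>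
        d (fst (rec0 {P, Q})) (snd (rec0 {P, Q})) = what d R P Q"
    by (intro ballI impI) (rule rec0_cond)
qed simp


lemma output_wt: "multirep_output X d Pt T R F \<Longrightarrow> wt (sym2 d) F = WF + (real p - 1)"
proof -
  assume "multirep_output X d Pt T R F"
  then obtain rc :: "nat set set \<Rightarrow> nat \<times> nat" and M where
    cond: "\<forall>P\<in>Pt. \<forall>Q\<in>Pt. P \<noteq> Q \<longrightarrow>
           ((fst (rc {P, Q}) \<in> P \<and> snd (rc {P, Q}) \<in> R Q) \<or>
            (fst (rc {P, Q}) \<in> Q \<and> snd (rc {P, Q}) \<in> R P)) \<and>
           d (fst (rc {P, Q})) (snd (rc {P, Q})) = what d R P Q" and
    mst: "is_mst Pt (sym2 (what d R)) M" and
    F: "F = Et \<union> {{fst (rc e), snd (rc e)} | e. e \<in> M}"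
    unfolding multirep_output_def Et_fe by (elim exE conjE)
  define g where "g e = {fst (rc e), snd (rc e)}" for e
  have F': "F = Et \<union> g ` M" unfolding F g_def by blast
  have spM: "spanning_tree Pt M" using mst unfolding is_mst_def by simp
  have ME: "M \<subseteq> edges_on Pt" using spM unfolding spanning_tree_def by simp
  have fM: "finite M" using ME fin_edges[OF fin_Pt] by (rule finite_subset)
  have cM: "card M = p - 1" using spM card_Pt unfolding spanning_tree_def by simp
  have key: "\<exists>A B x y. e = {A, B} \<and> A \<in> Pt \<and> B \<in> Pt \<and> A \<noteq> B \<and> g e = {x, y} \<and> x \<in> A \<and> y \<in> B \<and> d x y = 1"
    if e: "e \<in> M" for e
  proof -
    have "e \<in> edges_on Pt" using e ME by blast
    then obtain A B where AB: "e = {A, B}" "A \<in> Pt" "B \<in> Pt" "A \<noteq> B" unfolding edges_on_def by blast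
    have c: "((fst (rc {A, B}) \<in> A \<and> snd (rc {A, B}) \<in> R B) \<or>
            (fst (rc {A, B}) \<in> B \<and> snd (rc {A, B}) \<in> R A)) \<and>
           d (fst (rc {A, B})) (snd (rc {A, B})) = what d R A B" using cond AB(2,3,4) by blast
    have w: "what d R A B = 1" by (rule what1[OF AB(2,3,4)])
    have RA: "R A \<subseteq> A" "R B \<subseteq> B" using R_props AB(2,3) by auto
    have ge: "g e = {fst (rc {A, B}), snd (rc {A, B})}" unfolding g_def AB(1) ..
    from c show ?thesis
    proof (elim conjE disjE)
      assume h: "fst (rc {A, B}) \<in> A" "snd (rc {A, B}) \<in> R B"
        "d (fst (rc {A, B})) (snd (rc {A, B})) = what d R A B"
      show ?thesis
        by (rule exI[of _ A], rule exI[of _ B], rule exI[of _ "fst (rc {A, B})"], rule exI[of _ "snd (rc {A, B})"])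
           (use AB ge h w RA in auto)
    next
      assume h: "fst (rc {A, B}) \<in> B" "snd (rc {A, B}) \<in> R A"
        "d (fst (rc {A, B})) (snd (rc {A, B})) = what d R A B"
      have eBA: "e = {B, A}" using AB(1) by auto
      show ?thesis
        by (rule exI[of _ B], rule exI[of _ A], rule exI[of _ "fst (rc {A, B})"], rule exI[of _ "snd (rc {A, B})"])
           (use AB eBA ge h w RA in auto)
    qed
  qed
  have gX: "g e \<in> edges_on X" and g1: "sym2 d (g e) = 1" and gn: "\<not> (\<exists>C\<in>Pt. g e \<subseteq> C)"
    if e: "e \<in> M" for e
  proof -
    obtain A B x y where k: "e = {A, B}" "A \<in> Pt" "B \<in> Pt" "A \<noteq> B" "g e = {x, y}" "x \<in> A" "y \<in> B" "d x y = 1"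
      using key[OF e] by (elim exE conjE)
    have xy: "x \<noteq> y" using partD(3)[OF Pt_part k(2,3,4)] k(6,7) by blast
    show "g e \<in> edges_on X" unfolding edges_on_def using k(5,6,7) xy Pt_X[OF k(2)] Pt_X[OF k(3)] by blast
    show "sym2 d (g e) = 1" unfolding k(5) sym2_eq[of d, OF dsym] by (rule k(8))
    show "\<not> (\<exists>C\<in>Pt. g e \<subseteq> C)"
    proof
      assume "\<exists>C\<in>Pt. g e \<subseteq> C"
      then obtain C where C: "C \<in> Pt" "x \<in> C" "y \<in> C" using k(5) by auto
      have "C = A" using part_uniq[OF C(2) k(6) C(1) k(2)] .
      moreover have "C = B" using part_uniq[OF C(3) k(7) C(1) k(3)] .
      ultimately show False using k(4) by simp
    qed
  qed
  have inj: "inj_on g M"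
  proof (rule inj_onI)
    fix e1 e2 assume e1: "e1 \<in> M" and e2: "e2 \<in> M" and eq: "g e1 = g e2"
    obtain A1 B1 x1 y1 where k1: "e1 = {A1, B1}" "A1 \<in> Pt" "B1 \<in> Pt" "A1 \<noteq> B1" "g e1 = {x1, y1}" "x1 \<in> A1" "y1 \<in> B1"
      using key[OF e1] by (elim exE conjE)
    obtain A2 B2 x2 y2 where k2: "e2 = {A2, B2}" "A2 \<in> Pt" "B2 \<in> Pt" "A2 \<noteq> B2" "g e2 = {x2, y2}" "x2 \<in> A2" "y2 \<in> B2"
      using key[OF e2] by (elim exE conjE)
    have "{x1, y1} = {x2, y2}" using eq k1(5) k2(5) by simp
    then have "(x1 = x2 \<and> y1 = y2) \<or> (x1 = y2 \<and> y1 = x2)" by (simp add: doubleton_eq_iff)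
    then show "e1 = e2"
    proof (elim disjE conjE)
      assume "x1 = x2" "y1 = y2"
      then have "A1 = A2" "B1 = B2" using part_uniq[of x1 A1 A2] part_uniq[of y1 B1 B2] k1 k2 by simp_all
      then show ?thesis using k1(1) k2(1) by simp
    next
      assume "x1 = y2" "y1 = x2"
      then have "A1 = B2" "B1 = A2" using part_uniq[of x1 A1 B2] part_uniq[of y1 B1 A2] k1 k2 by simp_all
      then show ?thesis using k1(1) k2(1) by auto
    qed
  qed
  have disj: "Et \<inter> g ` M = {}"
  proof (rule ccontr)
    assume "Et \<inter> g ` M \<noteq> {}"
    then obtain e where "e \<in> M" "g e \<in> Et" by blast
    then show False using Et_intra[of "g e"] gn[of e] by simp
  qed
  have "wt (sym2 d) F = wt (sym2 d) Et + wt (sym2 d) (g ` M)"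
    unfolding F' wt_def by (rule sum.union_disjoint[OF fin_Et _ disj]) (use fM in simp)
  also have "wt (sym2 d) (g ` M) = (\<Sum>e\<in>M. sym2 d (g e))"
    unfolding wt_def by (rule sum.reindex[OF inj, unfolded comp_def])
  also have "\<dots> = (\<Sum>e\<in>M. 1)" by (rule sum.cong) (simp_all add: g1)
  also have "\<dots> = real p - 1" using cM p0 by (simp add: of_nat_diff)
  finally show ?thesis using wt_Et by simp
qed

lemma OPT_eq: "OPT = (1 + \<epsilon> * real l) * real p - \<epsilon>"
  unfolding OPT_def by (simp add: algebra_simps)

lemma OPT_pos: "OPT > 0"
proof -
  have "real p - 1 \<ge> 0" using p0 by simp
  then have "(real p - 1) * \<epsilon> \<ge> 0" using e0 by simp
  then show ?thesis using WF_OPT WF_pos by linarith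
qed

lemma num_eq: "WF + (real p - 1) = (2 + real l * \<epsilon> - \<epsilon>) * real p - 1"
  unfolding WF_def by (simp add: algebra_simps)

end

theorem theorem2:
  fixes p l :: nat and \<epsilon> :: real
  assumes "p > 0" and "l > 0" and "0 < \<epsilon>" and "\<epsilon> < 1"
  shows "\<exists>(X :: nat set) d Pt T R.
    finite X \<and> X \<noteq> {} \<and> metric_on X d \<and>
    initial_forest X Pt T \<and> gamma X d Pt T = 1 \<and>
    (\<forall>P\<in>Pt. R P \<subseteq> P \<and> card (R P) = l) \<and>
    (\<exists>S. mfc_opt X d Pt T S) \<and>
    (\<forall>S. mfc_opt X d Pt T S \<longrightarrow> is_mst X (sym2 d) S) \<and>
    (\<exists>F. multirep_output X d Pt T R F) \<and>
    (\<forall>F S. multirep_output X d Pt T R F \<and> mfc_opt X d Pt T S \<longrightarrow>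
       wt (sym2 d) F =
         ((2 + real l * \<epsilon> - \<epsilon>) * real p - 1) / ((1 + \<epsilon> * real l) * real p - \<epsilon>)
         * wt (sym2 d) S)"
proof -
  interpret inst l p \<epsilon> using assms by unfold_locales
  have ratio: "wt (sym2 d) F =
         ((2 + real l * \<epsilon> - \<epsilon>) * real p - 1) / ((1 + \<epsilon> * real l) * real p - \<epsilon>)
         * wt (sym2 d) S" if h: "multirep_output X d Pt T R F \<and> mfc_opt X d Pt T S" for F S
  proof -
    have "wt (sym2 d) F = (2 + real l * \<epsilon> - \<epsilon>) * real p - 1"
      using output_wt h num_eq by simp
    moreover have "wt (sym2 d) S = (1 + \<epsilon> * real l) * real p - \<epsilon>"
      using mfc_mst h OPT_eq by simp
    moreover have "(1 + \<epsilon> * real l) * real p - \<epsilon> \<noteq> 0" using OPT_pos OPT_eq by simp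
    ultimately show ?thesis by simp
  qed
  have main: "finite X \<and> X \<noteq> {} \<and> metric_on X d \<and>
    initial_forest X Pt T \<and> gamma X d Pt T = 1 \<and>
    (\<forall>P\<in>Pt. R P \<subseteq> P \<and> card (R P) = l) \<and>
    (\<exists>S. mfc_opt X d Pt T S) \<and>
    (\<forall>S. mfc_opt X d Pt T S \<longrightarrow> is_mst X (sym2 d) S) \<and>
    (\<exists>F. multirep_output X d Pt T R F) \<and>
    (\<forall>F S. multirep_output X d Pt T R F \<and> mfc_opt X d Pt T S \<longrightarrow>
       wt (sym2 d) F =
         ((2 + real l * \<epsilon> - \<epsilon>) * real p - 1) / ((1 + \<epsilon> * real l) * real p - \<epsilon>)
         * wt (sym2 d) S)"
  proof (intro conjI allI impI ballI)
    show "finite X" by (rule fin_X)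
    show "X \<noteq> {}" using U0 U_X by blast
    show "metric_on X d" by (rule metric)
    show "initial_forest X Pt T" unfolding initial_forest_def using Pt_part T_sp by simp
    show "gamma X d Pt T = 1" by (rule gamma1)
    fix P assume "P \<in> Pt"
    then show "R P \<subseteq> P" "card (R P) = l" using R_props by simp_all
  next
    show "\<exists>S. mfc_opt X d Pt T S" using mfc_S0 by blast
  next
    fix S assume "mfc_opt X d Pt T S"
    then show "is_mst X (sym2 d) S" using mfc_mst by simp
  next
    show "\<exists>F. multirep_output X d Pt T R F" using output_exists by blast
  next
    fix F S assume "multirep_output X d Pt T R F \<and> mfc_opt X d Pt T S"
    then show "wt (sym2 d) F =
         ((2 + real l * \<epsilon> - \<epsilon>) * real p - 1) / ((1 + \<epsilon> * real l) * real p - \<epsilon>)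
         * wt (sym2 d) S" by (rule ratio)
  qed
  show ?thesis by (intro exI) (rule main)
qed

end
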